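(* Let $\mathbb{A}$ be an alphabet, let $WW'$ be an almost-square over $\mathbb{A}$ (with $W'$ either an extension of $W$ or obtained from $W$ by deleting one letter), and let $V$ be a word over $\mathbb{A}$ such that $WW'V=XX'$ where $XX'$ is an almost-square (with $X'$ either an extension of $X$ or obtained from $X$ by deleting one letter). If $4\leq |V|\leq \frac{1}{2}|W|$, then $XX'$ is not square-free.
   Context: Words are finite sequences of letters; $|U|$ denotes the length of $U$. An extension of a word $W$ over $\mathbb{A}$ is a word $W_1xW_2$ with $W=W_1W_2$ ($W_1,W_2$ possibly empty) and $x\in\mathbb{A}$. An almost-square is a word of the form $WW'$ where $W'$ is either an extension of $W$ or is obtained by deleting one letter from $W$. A square is a nonempty word of the form $YY$; a word is square-free if none of its factors (contiguous subwords) is a square. *)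

theory Defs
  imports Main
begin

definition is_extension :: "'a list \<Rightarrow> 'a list \<Rightarrow> bool" where
  "is_extension W' W \<longleftrightarrow> (\<exists>W1 W2 x. W = W1 @ W2 \<and> W' = W1 @ [x] @ W2)"

definition is_deletion :: "'a list \<Rightarrow> 'a list \<Rightarrow> bool" where
  "is_deletion W' W \<longleftrightarrow> (\<exists>W1 W2 x. W = W1 @ [x] @ W2 \<and> W' = W1 @ W2)"

definition almost_square_pair :: "'a list \<Rightarrow> 'a list \<Rightarrow> bool" where
  "almost_square_pair W W' \<longleftrightarrow> is_extension W' W \<or> is_deletion W' W"

definition is_factor :: "'a list \<Rightarrow> 'a list \<Rightarrow> bool" where
  "is_factor U S \<longleftrightarrow> (\<exists>P Q. S = P @ U @ Q)"

definition square_free :: "'a list \<Rightarrow> bool" where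
  "square_free S \<longleftrightarrow> \<not> (\<exists>Y. Y \<noteq> [] \<and> is_factor (Y @ Y) S)"

end

theory Submission
  imports Defs
begin

lemma interval_sq:
  fixes S :: "'a list"
  assumes R: "\<forall>i. lo \<le> i \<and> i < hi \<longrightarrow> S!(i+a) = S!(i+b)"
    and ab: "a < b" and len: "lo + (b - a) \<le> hi" and L: "hi + b \<le> length S"
  shows "\<not> square_free S"
proof -
  define p where "p = b - a"
  define s where "s = lo + a"
  define Y where "Y = take p (drop s S)"
  have pp: "p > 0" using ab p_def by simp
  have sl: "s + 2*p \<le> length S" using len L ab unfolding s_def p_def by linarith
  have YY: "Y @ Y = take (2*p) (drop s S)"
  proof (rule nth_equalityI)
    show "length (Y @ Y) = length (take (2*p) (drop s S))" using sl unfolding Y_def by simp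
  next
    fix j assume "j < length (Y @ Y)"
    hence j: "j < 2*p" using sl unfolding Y_def by simp
    show "(Y @ Y) ! j = take (2*p) (drop s S) ! j"
    proof (cases "j < p")
      case True
      then show ?thesis using j sl unfolding Y_def by (simp add: nth_append)
    next
      case False
      have lY: "length Y = p" using sl unfolding Y_def by simp
      have "(Y @ Y) ! j = Y ! (j - p)" using False lY by (simp add: nth_append)
      also have "\<dots> = S ! (s + (j - p))" using False j sl unfolding Y_def by simp
      also have "\<dots> = S ! ((lo + (j - p)) + a)" unfolding s_def by (simp add: algebra_simps)
      also have "\<dots> = S ! ((lo + (j - p)) + b)"
        by (rule R[rule_format]) (use False j len in \<open>auto simp: p_def\<close>)
      also have "\<dots> = S ! (s + j)" unfolding s_def using False ab unfolding p_def by (simp add: algebra_simps)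
      also have "\<dots> = take (2*p) (drop s S) ! j" using j sl by simp
      finally show ?thesis .
    qed
  qed
  have "S = take s S @ (Y @ Y) @ drop (2*p) (drop s S)"
    unfolding YY by (simp only: append_take_drop_id)
  hence "is_factor (Y @ Y) S" unfolding is_factor_def by blast
  moreover have "Y \<noteq> []" using pp sl unfolding Y_def by simp
  ultimately show ?thesis unfolding square_free_def by blast
qed

lemma as_rel:
  assumes "almost_square_pair W W'" and S: "S = W @ W' @ R"
  shows "\<exists>k \<le> length W. (length W' = length W + 1 \<or> length W' + 1 = length W)
     \<and> (\<forall>i<k. S!i = S!(i + length W))
     \<and> (\<forall>i. k < i \<and> i < length W \<longrightarrow> S!i = S!(i + length W'))"
  using assms(1) unfolding almost_square_pair_def
proof
  assume "is_extension W' W"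
  then obtain W1 W2 x where e: "W = W1 @ W2" "W' = W1 @ [x] @ W2" unfolding is_extension_def by blast
  show ?thesis
  proof (intro exI[of _ "length W1"] conjI allI impI)
    fix i assume "i < length W1"
    then show "S!i = S!(i + length W)" using S e by (simp add: nth_append)
  next
    fix i assume "length W1 < i \<and> i < length W"
    then have i: "length W1 < i" "i < length W1 + length W2" using e by auto
    have "S!(i + length W') = S!(length W + (i+1))" using e by (simp add: algebra_simps)
    also have "\<dots> = W'!(i+1)" unfolding S
      by (subst nth_append_length_plus) (use i e in \<open>auto simp: nth_append\<close>)
    also have "\<dots> = W2!(i - length W1)" using i e by (simp add: nth_append)
    also have "\<dots> = S!i" using S i e by (auto simp: nth_append)
    finally show "S!i = S!(i + length W')" by simp
  qed (use e in auto)
next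
  assume "is_deletion W' W"
  then obtain W1 W2 x where e: "W = W1 @ [x] @ W2" "W' = W1 @ W2" unfolding is_deletion_def by blast
  show ?thesis
  proof (intro exI[of _ "length W1"] conjI allI impI)
    fix i assume "i < length W1"
    then show "S!i = S!(i + length W)" using S e by (simp add: nth_append)
  next
    fix i assume "length W1 < i \<and> i < length W"
    then have i: "length W1 < i" "i < length W1 + 1 + length W2" using e by auto
    have "S!(i + length W') = S!(length W + (i - 1))" using e i by (simp add: algebra_simps)
    also have "\<dots> = W'!(i - 1)" unfolding S
      by (subst nth_append_length_plus) (use i e in \<open>auto simp: nth_append\<close>)
    also have "\<dots> = W2!(i - 1 - length W1)"
    proof -
      have "\<not> i - 1 < length W1" using i by arith
      then show ?thesis using e by (simp add: nth_append)
    qed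
    also have "\<dots> = S!i" using S i e by (auto simp: nth_append)
    finally show "S!i = S!(i + length W')" by simp
  qed (use e in auto)
qed

theorem mainTheorem5:
  fixes W W' V X X' :: "'a list"
  assumes "almost_square_pair W W'"
    and "almost_square_pair X X'"
    and "W @ W' @ V = X @ X'"
    and "4 \<le> length V"
    and "2 * length V \<le> length W"
  shows "\<not> square_free (X @ X')"
proof (rule ccontr)
  assume sf: "\<not> \<not> square_free (X @ X')"
  define S where "S = X @ X'"
  have sfS: "square_free S" using sf S_def by simp
  obtain k where k: "k \<le> length W" "length W' = length W + 1 \<or> length W' + 1 = length W"
     "\<forall>i<k. S!i = S!(i + length W)"
     "\<forall>i. k < i \<and> i < length W \<longrightarrow> S!i = S!(i + length W')"
    using as_rel[OF assms(1), of S V] assms(3) S_def by auto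
  obtain k' where k': "k' \<le> length X" "length X' = length X + 1 \<or> length X' + 1 = length X"
     "\<forall>i<k'. S!i = S!(i + length X)"
     "\<forall>i. k' < i \<and> i < length X \<longrightarrow> S!i = S!(i + length X')"
    using as_rel[OF assms(2), of S "[]"] S_def by auto
  define n where "n = length W"
  define n' where "n' = length W'"
  define m where "m = length X"
  define m' where "m' = length X'"
  define v where "v = length V"
  have LS: "length S = m + m'" unfolding S_def m_def m'_def by simp
  have LS2: "length S = n + n' + v" using assms(3) unfolding S_def n_def n'_def v_def
    by (metis length_append add.assoc)
  have nn: "n' = n + 1 \<or> n' + 1 = n" using k(2) n_def n'_def by auto
  have mm: "m' = m + 1 \<or> m' + 1 = m" using k'(2) m_def m'_def by auto
  have v4: "4 \<le> v" "2 * v \<le> n" using assms(4,5) v_def n_def by auto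
  have nm: "n < m" "n' < m" "n < m'" "n' < m'" using LS LS2 nn mm v4 by linarith+
  have kn: "k \<le> n" "k' \<le> m" using k k' n_def m_def by auto
  have hW: "\<forall>i<k. S!i = S!(i + n)" "\<forall>i. k < i \<and> i < n \<longrightarrow> S!i = S!(i + n')"
    using k n_def n'_def by auto
  have hX: "\<forall>i<k'. S!i = S!(i + m)" "\<forall>i. k' < i \<and> i < m \<longrightarrow> S!i = S!(i + m')"
    using k' m_def m'_def by auto
  define a where "a = min k k'"
  define b where "b = max k k'"
  have I1: "a < m - n"
  proof (rule ccontr)
    assume "\<not> a < m - n"
    moreover have "\<forall>i. 0 \<le> i \<and> i < a \<longrightarrow> S!(i+n) = S!(i+m)"
      using hW hX unfolding a_def by (metis min_less_iff_conj)
    ultimately have "\<not> square_free S"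
      by (intro interval_sq[of 0 a S n m]) (use nm kn LS nn mm in \<open>auto simp: a_def\<close>)
    with sfS show False by simp
  qed
  have I3: "b < n \<Longrightarrow> n - b - 1 < m' - n'"
  proof (rule ccontr)
    assume bn: "b < n" and "\<not> n - b - 1 < m' - n'"
    moreover have "\<forall>i. b + 1 \<le> i \<and> i < n \<longrightarrow> S!(i+n') = S!(i+m')"
      using hW hX nm unfolding b_def by (metis Suc_eq_plus1 Suc_le_eq max.strict_boundedE less_trans)
    ultimately have "\<not> square_free S"
      by (intro interval_sq[of "b+1" n S n' m']) (use nm kn LS nn mm in auto)
    with sfS show False by simp
  qed
  have I2a: "k < k' \<Longrightarrow> min k' n - k - 1 < m - n'"
  proof (rule ccontr)
    assume kk: "k < k'" and "\<not> min k' n - k - 1 < m - n'"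
    moreover have "\<forall>i. k + 1 \<le> i \<and> i < min k' n \<longrightarrow> S!(i+n') = S!(i+m)"
      using hW hX by (metis Suc_eq_plus1 Suc_le_eq min_less_iff_conj)
    ultimately have "\<not> square_free S"
      by (intro interval_sq[of "k+1" "min k' n" S n' m]) (use nm kn LS nn mm in auto)
    with sfS show False by simp
  qed
  have I2b: "k' < k \<Longrightarrow> k - k' - 1 < m' - n"
  proof (rule ccontr)
    assume kk: "k' < k" and "\<not> k - k' - 1 < m' - n"
    moreover have "\<forall>i. k' + 1 \<le> i \<and> i < k \<longrightarrow> S!(i+n) = S!(i+m')"
      using hW hX kn nm by (metis Suc_eq_plus1 Suc_le_eq order.strict_trans2 less_trans)
    ultimately have "\<not> square_free S"
      by (intro interval_sq[of "k'+1" k S n m']) (use nm kn LS nn mm in auto)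
    with sfS show False by simp
  qed
  show False
    using I1 I2a I2b I3 LS LS2 nn mm v4 kn nm unfolding a_def b_def
    by (cases "k < k'"; cases "k' < k"; cases "max k k' < n"; simp; linarith)
qed

end
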